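(* Let $P_0\in\mathbb{C}^{n+1}$, let $f_1,\dots,f_N$ be holomorphic near $P_0$ with $f_\mu(P_0)=0$ for all $\mu$, let $0\le k\le n$, and let $G_1,\dots,G_k$ be holomorphic near $P_0$. For an index tuple $\mu=(\mu_1<\cdots<\mu_{n-k})$ in $\{1,\dots,N\}$ put $$A_\mu=\frac{\partial(f_{\mu_1},\dots,f_{\mu_{n-k}},G_1,\dots,G_k)}{\partial(z_1,\dots,z_n)},\qquad B_{\mu,\nu}=\frac{\partial(f_{\mu_1},\dots,f_{\mu_{n-k}},G_1,\dots,G_k,f_\nu)}{\partial(z_1,\dots,z_{n+1})},$$ $$E_\mu=A_\mu+\sum_{\nu=1}^N B_{\mu,\nu}\overline{f_\nu},$$ and (for $k\ge1$) $$T=\sum_{j=1}^k\ \sum_{1\le\lambda_1<\cdots<\lambda_{n-k+1}\le N}\left|\frac{\partial(f_{\lambda_1},\dots,f_{\lambda_{n-k+1}},G_1,\dots,\widehat{G_j},\dots,G_k)}{\partial(z_1,\dots,z_n)}\right|,$$ with $T=0$ when $k=0$ (here $\widehat{G_j}$ means $G_j$ is omitted). Then there exist an open neighborhood $U$ of $P_0$ and a constant $C>0$ such that on $U$: (i) $\displaystyle\sum_{\mu}|A_\mu|\le C\Big(\sum_\mu|E_\mu|+T\Big)$; (ii) for every $\mu$ and every $\nu\in\{1,\dots,N\}$, $\displaystyle |B_{\mu,\nu}|\le C\Big(\sum_{\mu'}|A_{\mu'}|+T\Big)$, where the sums over $\mu,\mu'$ run over all increasing $(n-k)$-tuples in $\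{1,\dots,N\}$.
   Context: For holomorphic functions $h_1,\dots,h_m$, $\frac{\partial(h_1,\dots,h_m)}{\partial(z_1,\dots,z_m)}$ denotes the determinant of the $m\times m$ matrix whose $i$-th row is $(\partial h_i/\partial z_1,\dots,\partial h_i/\partial z_m)$; the $n\times n$ Jacobians use only the variables $z_1,\dots,z_n$. *)

theory Defs
  imports "HOL-Analysis.Analysis"
begin

text \<open>Points of C^(n+1) are vectors of type complex^'m with CARD('m) = n+1; the
 coordinates z_1,...,z_(n+1) are the elements of 'm listed in increasing order
 (0-based: coord 0, ..., coord n).\<close>

definition coord :: "nat \<Rightarrow> 'm::{finite,linorder}" where
  "coord j = sorted_list_of_set (UNIV :: 'm set) ! j"

definition holo_near :: "(complex^'m \<Rightarrow> complex) \<Rightarrow> complex^'m \<Rightarrow> bool" where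
  "holo_near f P \<longleftrightarrow> (\<exists>V. open V \<and> P \<in> V \<and>
      (\<forall>z\<in>V. \<exists>c::complex^'m. (f has_derivative (\<lambda>h. \<Sum>i\<in>UNIV. c$i * h$i)) (at z)))"

definition cpartial :: "(complex^'m \<Rightarrow> complex) \<Rightarrow> 'm \<Rightarrow> complex^'m \<Rightarrow> complex" where
  "cpartial f i z = frechet_derivative f (at z) (axis i 1)"

text \<open>jac m [h_1,...,h_m] z = d(h_1,...,h_m)/d(z_1,...,z_m) at z (Leibniz formula).\<close>
definition jac :: "nat \<Rightarrow> (complex^('m::{finite,linorder}) \<Rightarrow> complex) list \<Rightarrow> complex^('m::{finite,linorder}) \<Rightarrow> complex" where
  "jac m hs z = (\<Sum>p | p permutes {..<m}.
      of_int (sign p) * (\<Prod>i<m. cpartial (hs ! i) (coord (p i)) z))"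

definition incr_tuples :: "nat \<Rightarrow> nat \<Rightarrow> nat list set" where
  "incr_tuples N r = {xs. sorted_wrt (<) xs \<and> length xs = r \<and> set xs \<subseteq> {1..N}}"

end

theory Submission imports Defs "HOL-Complex_Analysis.Complex_Analysis" "Jordan_Normal_Form.Determinant" begin


lemma norm_axis_c: "norm (axis i (w::complex) :: complex^'m) = norm w"
proof -
  have "norm (axis i w :: complex^'m) = sqrt (\<Sum>j\<in>UNIV. (norm ((axis i w :: complex^'m) $ j))\<^sup>2)"
    by (simp add: norm_vec_def L2_set_def)
  also have "(\<Sum>j\<in>UNIV. (norm ((axis i w :: complex^'m) $ j))\<^sup>2) = (norm w)\<^sup>2"
    by (simp add: axis_def if_distrib[of norm] if_distrib[of "\<lambda>x. x\<^sup>2"] cong: if_cong)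
  finally show ?thesis by simp
qed

lemma bl_axis: "bounded_linear (axis i :: complex \<Rightarrow> complex^'m)"
proof (rule bounded_linear_intro[where K=1])
  show "\<And>x y. axis i (x + y) = (axis i x + axis i y :: complex^'m)" by (simp add: axis_def Finite_Cartesian_Product.vec_eq_iff)
  show "\<And>r x. axis i (r *\<^sub>R x) = (r *\<^sub>R axis i x :: complex^'m)" by (simp add: axis_def Finite_Cartesian_Product.vec_eq_iff)
  show "\<And>x. norm (axis i x :: complex^'m) \<le> norm x * 1" by (simp add: norm_axis_c)
qed

lemma holo_bound:
  fixes f :: "complex^'m \<Rightarrow> complex"
  assumes "holo_near f P"
  shows "\<exists>U K. open U \<and> P \<in> U \<and> (\<forall>z\<in>U. \<forall>i. cmod (cpartial f i z) \<le> K)"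
proof -
  obtain V where V: "open V" "P \<in> V"
    and d: "\<And>z. z \<in> V \<Longrightarrow> \<exists>c::complex^'m. (f has_derivative (\<lambda>h. \<Sum>i\<in>UNIV. c$i * h$i)) (at z)"
    using assms unfolding holo_near_def by blast
  obtain e where e: "e > 0" "ball P e \<subseteq> V" using V open_contains_ball by blast
  define r where "r = e/3"
  have r: "r > 0" using e by (simp add: r_def)
  have contV: "continuous_on V f"
    using d has_derivative_continuous continuous_at_imp_continuous_on by blast
  have cb: "cball P (2*r) \<subseteq> V"
  proof -
    have "cball P (2*r) \<subseteq> ball P e" using e by (auto simp: r_def)
    then show ?thesis using e by blast
  qed
  have "compact (f ` cball P (2*r))"
    by (rule compact_continuous_image) (use contV cb continuous_on_subset in auto)
  then obtain M where M: "\<And>x. x \<in> cball P (2*r) \<Longrightarrow> cmod (f x) \<le> M"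
    using compact_imp_bounded bounded_iff by (metis image_eqI)
  show ?thesis
  proof (intro exI conjI ballI allI)
    show "open (ball P r)" by simp
    show "P \<in> ball P r" using r by simp
    fix z i assume z: "z \<in> ball P r"
    define g where "g = (\<lambda>w. f (z + axis i w))"
    have inV: "z + axis i w \<in> ball P e" if "norm w < 2*r" for w
    proof -
      have "dist P (z + axis i w) \<le> dist P z + norm (axis i w :: complex^'m)"
        by (metis dist_norm dist_triangle2 norm_minus_commute add_diff_cancel_left')
      then show ?thesis using z that r_def by (simp add: norm_axis_c)
    qed
    have gd: "\<exists>c::complex^'m. (g has_field_derivative c$i) (at w) \<and>
               (f has_derivative (\<lambda>h. \<Sum>i\<in>UNIV. c$i * h$i)) (at (z + axis i w))"
      if wr: "norm w < 2*r" for w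
    proof -
      obtain c :: "complex^'m" where c: "(f has_derivative (\<lambda>h. \<Sum>i\<in>UNIV. c$i * h$i)) (at (z + axis i w))"
        using d inV[OF wr] e by blast
      have lin: "((\<lambda>w. z + axis i w) has_derivative (\<lambda>h. axis i h)) (at w)"
        using has_derivative_add[OF has_derivative_const[of z] bounded_linear_imp_has_derivative[OF bl_axis[of i]]]
        by simp
      have "(g has_derivative ((\<lambda>h. \<Sum>i\<in>UNIV. c$i * h$i) \<circ> (\<lambda>h. axis i h))) (at w)"
        unfolding g_def using diff_chain_at[OF lin c] by (simp add: o_def)
      moreover have "((\<lambda>h. \<Sum>i\<in>UNIV. c$i * h$i) \<circ> (\<lambda>h. axis i h)) = (\<lambda>h. c$i * h)"
        by (auto simp: axis_def o_def fun_eq_iff if_distrib[of "\<lambda>x. _ * x"] cong: if_cong)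
      moreover have eq: "(*) (c$i) = (\<lambda>h. h * c$i)" by (rule ext) (simp add: mult.commute)
      ultimately have "(g has_field_derivative c$i) (at w)"
        unfolding has_field_derivative_def eq by simp
      then show ?thesis using c by blast
    qed
    have hol: "g holomorphic_on ball 0 (2*r)"
    proof -
      have "g field_differentiable (at w)" if "w \<in> ball 0 (2*r)" for w
      proof -
        have "norm w < 2*r" using that by simp
        then obtain c :: "complex^'m" where "(g has_field_derivative c$i) (at w)" using gd by blast
        then show ?thesis unfolding field_differentiable_def by blast
      qed
      then show ?thesis unfolding holomorphic_on_def using field_differentiable_at_within by blast
    qed
    obtain c :: "complex^'m" where c0: "(g has_field_derivative c$i) (at 0)"
      and c1': "(f has_derivative (\<lambda>h. \<Sum>i\<in>UNIV. c$i * h$i)) (at (z + axis i 0))"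
      using gd[of 0] r by auto
    have z0: "z + axis i 0 = z" by (simp add: axis_def Finite_Cartesian_Product.vec_eq_iff)
    have c1: "(f has_derivative (\<lambda>h. \<Sum>i\<in>UNIV. c$i * h$i)) (at z)" using c1' unfolding z0 .
    have "cpartial f i z = c$i"
      unfolding cpartial_def using frechet_derivative_at[OF c1, symmetric]
      by (simp add: axis_def if_distrib[of "\<lambda>x. _ * x"] cong: if_cong)
    also have "c$i = deriv g 0" using c0 DERIV_imp_deriv by metis
    also have "cmod (deriv g 0) \<le> M / r"
    proof -
      have "norm ((deriv ^^ 1) g 0) \<le> (fact 1) * M / r^1"
      proof (rule Cauchy_inequality)
        show "g holomorphic_on ball 0 r"
          using hol r by (auto intro: holomorphic_on_subset)
        show "continuous_on (cball 0 r) g"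
          by (rule continuous_on_subset[OF holomorphic_on_imp_continuous_on[OF hol]]) (use r in auto)
        show "0 < r" by (rule r)
        fix x :: complex assume "norm (0 - x) = r"
        then have "norm x < 2*r" using r by simp
        then have "z + axis i x \<in> cball P (2*r)"
        proof -
          have "dist P (z + axis i x) \<le> dist P z + norm (axis i x :: complex^'m)"
            by (metis dist_norm dist_triangle2 norm_minus_commute add_diff_cancel_left')
          then show ?thesis using z `norm (0 - x) = r` by (simp add: norm_axis_c)
        qed
        then show "norm (g x) \<le> M" using M g_def by simp
      qed
      then show ?thesis by simp
    qed
    finally show "cmod (cpartial f i z) \<le> M / r" .
  qed
qed



definition JM :: "nat \<Rightarrow> (complex^('m::{finite,linorder}) \<Rightarrow> complex) list \<Rightarrow> complex^('m::{finite,linorder}) \<Rightarrow> complex Matrix.mat" where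
  "JM m hs z = Matrix.mat m m (\<lambda>(i,j). cpartial (hs!i) (coord j) z)"

lemma JM_carrier: "JM m hs z \<in> carrier_mat m m" by (simp add: JM_def)

lemma jac_det: "jac m hs z = Determinant.det (JM m hs z)"
proof -
  have "Determinant.det (JM m hs z) = (\<Sum> p \<in> {p. p permutes {0 ..< m}}.
     of_int (sign p) * (\<Prod> i = 0 ..< m. JM m hs z $$ (i, p i)))"
    by (rule det_def'[OF JM_carrier])
  also have "\<dots> = (\<Sum>p | p permutes {..<m}.
      of_int (sign p) * (\<Prod>i<m. cpartial (hs ! i) (coord (p i)) z))"
  proof (rule sum.cong)
    show "{p. p permutes {0..<m}} = {p. p permutes {..<m}}" by (simp add: lessThan_atLeast0)
    fix p assume "p \<in> {p. p permutes {..<m}}"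
    then have p: "p permutes {..<m}" by simp
    have "(\<Prod> i = 0 ..< m. JM m hs z $$ (i, p i)) = (\<Prod>i<m. cpartial (hs ! i) (coord (p i)) z)"
      unfolding lessThan_atLeast0[symmetric]
    proof (rule prod.cong[OF refl])
      fix x assume "x \<in> {..<m}"
      moreover then have "p x < m" using permutes_in_image[OF p, of x] by simp
      ultimately show "JM m hs z $$ (x, p x) = cpartial (hs ! x) (coord (p x)) z"
        by (simp add: JM_def)
    qed
    then show "of_int (sign p) * (\<Prod> i = 0 ..< m. JM m hs z $$ (i, p i)) =
      of_int (sign p) * (\<Prod>i<m. cpartial (hs ! i) (coord (p i)) z)" by simp
  qed
  finally show ?thesis unfolding jac_def by simp
qed

lemma jac_perm:
  assumes len: "length hs = m" and ms: "mset hs' = mset hs"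
  shows "cmod (jac m hs' z) = cmod (jac m hs z)"
proof -
  obtain p where p: "p permutes {..<length hs}" and pl: "permute_list p hs = hs'"
    using mset_eq_permutation[OF ms] by blast
  have p': "p permutes {0..<m}" using p len by (simp add: lessThan_atLeast0)
  have "JM m hs' z = Matrix.mat m m (\<lambda>(i,j). JM m hs z $$ (p i, j))"
    unfolding pl[symmetric]
  proof (rule eq_matI)
    fix i j assume ij: "i < dim_row (Matrix.mat m m (\<lambda>(i, j). JM m hs z $$ (p i, j)))"
      "j < dim_col (Matrix.mat m m (\<lambda>(i, j). JM m hs z $$ (p i, j)))"
    then have i: "i < m" "j < m" by auto
    have "p i < m" using permutes_in_image[OF p', of i] i by simp
    then show "JM m (permute_list p hs) z $$ (i, j) =
         Matrix.mat m m (\<lambda>(i, j). JM m hs z $$ (p i, j)) $$ (i, j)"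
      using i p len by (simp add: permute_list_nth JM_def)
  qed (auto simp: JM_def)
  then have "Determinant.det (JM m hs' z) = of_int (sign p) * Determinant.det (JM m hs z)"
    using det_permute_rows[OF JM_carrier p'] by simp
  moreover have "cmod (of_int (sign p)) = 1" by (simp add: sign_def)
  ultimately show ?thesis by (simp add: jac_det norm_mult)
qed

lemma jac_dup:
  assumes len: "length hs = m" and nd: "\<not> distinct hs"
  shows "jac m hs z = 0"
proof -
  obtain i j where ij: "i < m" "j < m" "i \<noteq> j" "hs!i = hs!j"
    using nd len by (auto simp: distinct_conv_nth)
  have "row (JM m hs z) i = row (JM m hs z) j"
    using ij by (auto simp: JM_def)
  then show ?thesis unfolding jac_det
    by (rule det_identical_rows[OF JM_carrier ij(3) ij(1) ij(2)])
qed

lemma nth_take_drop: "i < length hs \<Longrightarrow> i' < length hs - 1 \<Longrightarrow>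
   (take i hs @ drop (Suc i) hs) ! i' = hs ! (if i' < i then i' else Suc i')"
  by (auto simp: nth_append min_def)

lemma jac_expand:
  assumes len: "length hs = Suc m"
  shows "cmod (jac (Suc m) hs z) \<le> (\<Sum>i<Suc m. cmod (cpartial (hs!i) (coord m) z) *
            cmod (jac m (take i hs @ drop (Suc i) hs) z))"
proof -
  have "jac (Suc m) hs z = (\<Sum>i<Suc m. JM (Suc m) hs z $$ (i,m) * cofactor (JM (Suc m) hs z) i m)"
    unfolding jac_det by (rule laplace_expansion_column[OF JM_carrier]) simp
  also have "\<dots> = (\<Sum>i<Suc m. cpartial (hs!i) (coord m) z * ((-1)^(i+m) * jac m (take i hs @ drop (Suc i) hs) z))"
  proof (rule sum.cong[OF refl])
    fix i assume i: "i \<in> {..<Suc m}"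
    have "mat_delete (JM (Suc m) hs z) i m = JM m (take i hs @ drop (Suc i) hs) z"
      unfolding mat_delete_def JM_def
      by (rule eq_matI) (use i len in \<open>auto simp: nth_take_drop\<close>)
    then show "JM (Suc m) hs z $$ (i,m) * cofactor (JM (Suc m) hs z) i m =
      cpartial (hs!i) (coord m) z * ((-1)^(i+m) * jac m (take i hs @ drop (Suc i) hs) z)"
    proof -
      have "JM (Suc m) hs z $$ (i,m) = cpartial (hs!i) (coord m) z" using i by (simp add: JM_def)
      then show ?thesis unfolding cofactor_def jac_det[of m] \<open>mat_delete (JM (Suc m) hs z) i m = JM m (take i hs @ drop (Suc i) hs) z\<close>
        by simp
    qed
  qed
  finally have eq: "jac (Suc m) hs z = (\<Sum>i<Suc m. cpartial (hs!i) (coord m) z * ((-1)^(i+m) * jac m (take i hs @ drop (Suc i) hs) z))" .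
  have "cmod (jac (Suc m) hs z) \<le> (\<Sum>i<Suc m. cmod (cpartial (hs!i) (coord m) z * ((-1)^(i+m) * jac m (take i hs @ drop (Suc i) hs) z)))"
    unfolding eq by (rule norm_sum)
  also have "\<dots> = (\<Sum>i<Suc m. cmod (cpartial (hs!i) (coord m) z) *
            cmod (jac m (take i hs @ drop (Suc i) hs) z))"
    by (simp add: norm_mult norm_power)
  finally show ?thesis .
qed



lemma finite_incr: "finite (incr_tuples N r)"
proof -
  have "incr_tuples N r \<subseteq> {xs. set xs \<subseteq> {1..N} \<and> length xs = r}"
    by (auto simp: incr_tuples_def)
  moreover have "finite {xs. set xs \<subseteq> {1..N} \<and> length xs = r}"
    by (rule finite_lists_length_eq) simp
  ultimately show ?thesis by (rule finite_subset)
qed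

lemma mset_del: "i < length xs \<Longrightarrow> mset (take i xs @ drop (Suc i) xs) = mset xs - {#xs!i#}"
proof -
  assume i: "i < length xs"
  have "mset xs = mset (take i xs @ xs!i # drop (Suc i) xs)"
    using id_take_nth_drop[OF i] by simp
  then show ?thesis by simp
qed

lemma sorted_del: "sorted_wrt (<) (xs::nat list) \<Longrightarrow> sorted_wrt (<) (take i xs @ drop (Suc i) xs)"
proof -
  assume s: "sorted_wrt (<) xs"
  have a: "sorted_wrt (<) (take i xs)" "\<forall>x\<in>set (take i xs). \<forall>y\<in>set (drop i xs). x < y"
    using sorted_wrt_append[of "(<)" "take i xs" "drop i xs"] s by simp_all
  have b: "sorted_wrt (<) (drop (Suc i) xs)" using s by (simp add: sorted_wrt_drop)
  have "set (drop (Suc i) xs) \<subseteq> set (drop i xs)" by (simp add: set_drop_subset_set_drop)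
  then show ?thesis using a b by (auto simp: sorted_wrt_append)
qed

lemma insert_bound:
  fixes f G :: "nat \<Rightarrow> complex^('m::{finite,linorder}) \<Rightarrow> complex"
  assumes s: "sorted_wrt (<) mu" and sN: "set mu \<subseteq> {1..N}" and nu: "nu \<in> {1..N}"
    and len: "length mu + length gs + 1 = n"
  shows "cmod (jac n (map f mu @ map G gs @ [f nu]) z) = 0 \<or>
    (insort nu mu \<in> incr_tuples N (length mu + 1) \<and>
     cmod (jac n (map f mu @ map G gs @ [f nu]) z) = cmod (jac n (map f (insort nu mu) @ map G gs) z))"
proof (cases "nu \<in> set mu")
  case True
  then have nd: "\<not> distinct (map f mu @ map G gs @ [f nu])" by auto
  have ln: "length (map f mu @ map G gs @ [f nu]) = n" using len by simp
  show ?thesis using jac_dup[OF ln nd] by simp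
next
  case False
  have inc: "insort nu mu \<in> incr_tuples N (length mu + 1)"
    using s sN nu False by (auto simp: incr_tuples_def strict_sorted_iff sorted_insort distinct_insort set_insort_key)
  have ms: "mset (map f mu @ map G gs @ [f nu]) = mset (map f (insort nu mu) @ map G gs)"
    by simp
  have "cmod (jac n (map f mu @ map G gs @ [f nu]) z) = cmod (jac n (map f (insort nu mu) @ map G gs) z)"
    by (rule jac_perm[OF _ ms]) (use len in simp)
  then show ?thesis using inc by blast
qed

lemma filter_neq_remove1: "distinct xs \<Longrightarrow> filter (\<lambda>i. i \<noteq> j) xs = remove1 j xs"
  by (induction xs) (auto simp: remove1_idem)

lemma minor_bound:
  fixes f G :: "nat \<Rightarrow> complex^('m::{finite,linorder}) \<Rightarrow> complex"
  assumes hk: "k \<le> n" and mu: "mu \<in> incr_tuples N (n-k)" and nu: "nu \<in> {1..N}" and i: "i < Suc n"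
  defines "hs \<equiv> map f mu @ map G [1..<k+1] @ [f nu]"
  shows "cmod (jac n (take i hs @ drop (Suc i) hs) z) \<le>
     (\<Sum>mu'\<in>incr_tuples N (n-k). cmod (jac n (map f mu' @ map G [1..<k+1]) z)) +
     (\<Sum>j=1..k. \<Sum>lam\<in>incr_tuples N (n-k+1). cmod (jac n (map f lam @ map G (filter (\<lambda>i. i \<noteq> j) [1..<k+1])) z))"
    (is "?x \<le> ?S1 + ?S2")
proof -
  define gs where "gs = [1..<k+1]"
  have lgs: "length gs = k" by (simp add: gs_def)
  have hs: "hs = map f mu @ map G gs @ [f nu]" by (simp add: hs_def gs_def)
  have dgs: "distinct gs" by (simp add: gs_def)
  have lmu: "length mu = n - k" and smu: "sorted_wrt (<) mu" and setmu: "set mu \<subseteq> {1..N}"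
    using mu by (auto simp: incr_tuples_def)
  have S1nn: "0 \<le> ?S1" by (simp add: sum_nonneg)
  have S2nn: "0 \<le> ?S2" by (simp add: sum_nonneg)
  have le1: "cmod (jac n (map f mu' @ map G gs) z) \<le> ?S1 + ?S2" if "mu' \<in> incr_tuples N (n-k)" for mu'
  proof -
    have "cmod (jac n (map f mu' @ map G gs) z) \<le> ?S1"
      unfolding gs_def by (rule member_le_sum[OF that]) (auto simp: finite_incr)
    then show ?thesis using S2nn by linarith
  qed
  have le2: "cmod (jac n (map f lam @ map G (filter (\<lambda>i. i \<noteq> j) gs)) z) \<le> ?S1 + ?S2"
    if j: "j \<in> {1..k}" and lam: "lam \<in> incr_tuples N (n-k+1)" for j lam
  proof -
    have "cmod (jac n (map f lam @ map G (filter (\<lambda>i. i \<noteq> j) gs)) z) \<le>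
       (\<Sum>lam\<in>incr_tuples N (n-k+1). cmod (jac n (map f lam @ map G (filter (\<lambda>i. i \<noteq> j) [1..<k+1])) z))"
      unfolding gs_def by (rule member_le_sum[OF lam]) (auto simp: finite_incr)
    also have "\<dots> \<le> ?S2"
      by (rule member_le_sum[OF j, where f="\<lambda>j. \<Sum>lam\<in>incr_tuples N (n-k+1). cmod (jac n (map f lam @ map G (filter (\<lambda>i. i \<noteq> j) [1..<k+1])) z)"])
         (auto simp: sum_nonneg)
    finally show ?thesis using S1nn by linarith
  qed
  consider "i = n" | "i < n - k" | "n - k \<le> i" "i < n" using i by linarith
  then show ?thesis
  proof cases
    case 1
    have "take i hs @ drop (Suc i) hs = map f mu @ map G gs"
      using 1 lmu lgs hk by (simp add: hs)
    then show ?thesis using le1[OF mu] by simp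
  next
    case 2
    define mu0 where "mu0 = take i mu @ drop (Suc i) mu"
    have eq: "take i hs @ drop (Suc i) hs = map f mu0 @ map G gs @ [f nu]"
      using 2 lmu by (simp add: hs mu0_def take_map drop_map)
    have s0: "sorted_wrt (<) mu0" unfolding mu0_def by (rule sorted_del[OF smu])
    have set0: "set mu0 \<subseteq> {1..N}" unfolding mu0_def using setmu
      using set_take_subset[of i mu] set_drop_subset[of "Suc i" mu] by auto
    have l0: "length mu0 = n - k - 1" using 2 lmu by (simp add: mu0_def)
    have len: "length mu0 + length gs + 1 = n" using l0 lgs 2 hk by simp
    from insert_bound[OF s0 set0 nu len, of f G z]
    show ?thesis
    proof
      assume "cmod (jac n (map f mu0 @ map G gs @ [f nu]) z) = 0"
      then show ?thesis using eq S1nn S2nn by simp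
    next
      assume a: "insort nu mu0 \<in> incr_tuples N (length mu0 + 1) \<and>
        cmod (jac n (map f mu0 @ map G gs @ [f nu]) z) = cmod (jac n (map f (insort nu mu0) @ map G gs) z)"
      have "length mu0 + 1 = n - k" using l0 2 by simp
      then show ?thesis using a le1[of "insort nu mu0"] eq by simp
    qed
  next
    case 3
    define t where "t = i - (n - k)"
    have t: "t < k" "i = length mu + t" using 3 lmu hk by (auto simp: t_def)
    define gs0 where "gs0 = take t gs @ drop (Suc t) gs"
    have eq: "take i hs @ drop (Suc i) hs = map f mu @ map G gs0 @ [f nu]"
      using t lgs by (simp add: hs gs0_def take_map drop_map)
    have lg0: "length gs0 = k - 1" using t lgs by (simp add: gs0_def)
    have len: "length mu + length gs0 + 1 = n" using lg0 lmu t hk by simp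
    have gt: "gs ! t = t + 1" using t nth_upt[of 1 t "k+1"] unfolding gs_def by (simp del: upt_Suc)
    have msg: "mset gs0 = mset (filter (\<lambda>i. i \<noteq> t+1) gs)"
      unfolding gs0_def using mset_del[of t gs] t lgs gt filter_neq_remove1[OF dgs] by simp
    from insert_bound[OF smu setmu nu len, of f G z]
    show ?thesis
    proof
      assume "cmod (jac n (map f mu @ map G gs0 @ [f nu]) z) = 0"
      then show ?thesis using eq S1nn S2nn by simp
    next
      assume a: "insort nu mu \<in> incr_tuples N (length mu + 1) \<and>
        cmod (jac n (map f mu @ map G gs0 @ [f nu]) z) = cmod (jac n (map f (insort nu mu) @ map G gs0) z)"
      have ms: "mset (map f (insort nu mu) @ map G gs0) = mset (map f (insort nu mu) @ map G (filter (\<lambda>i. i \<noteq> t+1) gs))"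
      proof -
        have mg: "mset (map G gs0) = mset (map G (filter (\<lambda>i. i \<noteq> t+1) gs))" by (simp only: mset_map msg)
        show ?thesis using mg by (simp del: mset_filter)
      qed
      have ln: "length (map f (insort nu mu) @ map G (filter (\<lambda>i. i \<noteq> t+1) gs)) = n"
        using len msg by (simp flip: size_mset)
      have "cmod (jac n (map f (insort nu mu) @ map G gs0) z) =
            cmod (jac n (map f (insort nu mu) @ map G (filter (\<lambda>i. i \<noteq> t+1) gs)) z)"
        by (rule jac_perm[OF ln ms])
      moreover have "t + 1 \<in> {1..k}" using t by simp
      moreover have "insort nu mu \<in> incr_tuples N (n-k+1)" using a lmu by simp
      ultimately show ?thesis using a le2[of "t+1" "insort nu mu"] eq by simp
    qed
  qed
qed




lemma holo_bound_fin:
  fixes H :: "(complex^'m \<Rightarrow> complex) set"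
  assumes "finite H" "\<forall>h\<in>H. holo_near h P"
  shows "\<exists>U K. open U \<and> P \<in> U \<and> K \<ge> 0 \<and> (\<forall>z\<in>U. \<forall>h\<in>H. \<forall>i. cmod (cpartial h i z) \<le> K)"
  using assms
proof (induction H rule: finite_induct)
  case empty
  show ?case by (rule exI[of _ UNIV], rule exI[of _ 0]) simp
next
  case (insert h H)
  then obtain U K where U: "open U" "P \<in> U" "K \<ge> 0" "\<forall>z\<in>U. \<forall>h\<in>H. \<forall>i. cmod (cpartial h i z) \<le> K"
    by auto
  obtain U' K' where U': "open U'" "P \<in> U'" "\<forall>z\<in>U'. \<forall>i. cmod (cpartial h i z) \<le> K'"
    using holo_bound[of h P] insert.prems by auto
  show ?case
    apply (rule exI[of _ "U \<inter> U'"], rule exI[of _ "max K K'"])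
    using U U' by (force simp: le_max_iff_disj)
qed

lemma small_fin:
  fixes H :: "(complex^'m \<Rightarrow> complex) set"
  assumes "finite H" "\<forall>h\<in>H. holo_near h P \<and> h P = 0" and e: "e > 0"
  shows "\<exists>U. open U \<and> P \<in> U \<and> (\<forall>z\<in>U. \<forall>h\<in>H. cmod (h z) \<le> e)"
  using assms(1,2)
proof (induction H rule: finite_induct)
  case empty
  show ?case by (rule exI[of _ UNIV]) simp
next
  case (insert h H)
  then obtain U where U: "open U" "P \<in> U" "\<forall>z\<in>U. \<forall>h\<in>H. cmod (h z) \<le> e"
    by auto
  have hn: "holo_near h P" "h P = 0" using insert.prems by auto
  then obtain V where V: "P \<in> V"
    and d: "\<And>z. z \<in> V \<Longrightarrow> \<exists>c::complex^'m. (h has_derivative (\<lambda>h. \<Sum>i\<in>UNIV. c$i * h$i)) (at z)"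
    unfolding holo_near_def by blast
  have "continuous (at P) h" using d[OF V] has_derivative_continuous by blast
  then obtain d where d: "d > 0" "\<And>z. dist z P < d \<Longrightarrow> dist (h z) (h P) < e"
    using e unfolding continuous_at_eps_delta by blast
  show ?case
    apply (rule exI[of _ "U \<inter> ball P d"])
    using U d hn by (auto simp: dist_commute dist_norm less_imp_le)
qed




lemma half_lemma: "(a::real) \<le> s + 1/2 * (a + t) \<Longrightarrow> 0 \<le> t \<Longrightarrow> a \<le> 2 * (s + t)"
  by (simp add: field_simps)

theorem mainTheorem5:
  fixes P0 :: "complex^('m::{finite,linorder})"
    and f G :: "nat \<Rightarrow> complex^('m::{finite,linorder}) \<Rightarrow> complex"
    and n N k :: nat
  assumes dim: "CARD('m) = n + 1"
    and hf: "\<And>\<mu>. \<mu> \<in> {1..N} \<Longrightarrow> holo_near (f \<mu>) P0"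
    and f0: "\<And>\<mu>. \<mu> \<in> {1..N} \<Longrightarrow> f \<mu> P0 = 0"
    and hk: "k \<le> n"
    and hG: "\<And>j. j \<in> {1..k} \<Longrightarrow> holo_near (G j) P0"
  defines "A \<equiv> \<lambda>\<mu> z. jac n (map f \<mu> @ map G [1..<k+1]) z"
    and "B \<equiv> \<lambda>\<mu> \<nu> z. jac (n+1) (map f \<mu> @ map G [1..<k+1] @ [f \<nu>]) z"
  defines "E \<equiv> \<lambda>\<mu> z. A \<mu> z + (\<Sum>\<nu>=1..N. B \<mu> \<nu> z * cnj (f \<nu> z))"
    and "T \<equiv> \<lambda>z. (\<Sum>j=1..k. \<Sum>lam\<in>incr_tuples N (n-k+1).
            cmod (jac n (map f lam @ map G (filter (\<lambda>i. i \<noteq> j) [1..<k+1])) z))"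
  shows "\<exists>U C. open U \<and> P0 \<in> U \<and> C > 0 \<and>
    (\<forall>z\<in>U.
      (\<Sum>\<mu>\<in>incr_tuples N (n-k). cmod (A \<mu> z))
         \<le> C * ((\<Sum>\<mu>\<in>incr_tuples N (n-k). cmod (E \<mu> z)) + T z)
      \<and> (\<forall>\<mu>\<in>incr_tuples N (n-k). \<forall>\<nu>\<in>{1..N}.
           cmod (B \<mu> \<nu> z) \<le> C * ((\<Sum>\<mu>'\<in>incr_tuples N (n-k). cmod (A \<mu>' z)) + T z)))"
proof -
  define H where "H = f ` {1..N} \<union> G ` {1..k}"
  have finH: "finite H" by (simp add: H_def)
  have holoH: "\<forall>h\<in>H. holo_near h P0" using hf hG by (auto simp: H_def)
  obtain U1 K where U1: "open U1" "P0 \<in> U1" "K \<ge> 0"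
    and Kb: "\<And>z h i. z \<in> U1 \<Longrightarrow> h \<in> H \<Longrightarrow> cmod (cpartial h i z) \<le> K"
    using holo_bound_fin[OF finH holoH] by blast
  define C2 where "C2 = real (Suc n) * K + 1"
  have C2pos: "C2 > 0"
  proof -
    have "0 \<le> real (Suc n) * K" using U1(3) by simp
    then show ?thesis by (simp add: C2_def)
  qed
  define SA where "SA z = (\<Sum>\<mu>\<in>incr_tuples N (n-k). cmod (A \<mu> z))" for z
  have SAnn: "SA z \<ge> 0" for z by (simp add: SA_def sum_nonneg)
  have Tnn: "T z \<ge> 0" for z by (simp add: T_def sum_nonneg)
  have Bb: "cmod (B \<mu> \<nu> z) \<le> C2 * (SA z + T z)"
    if z: "z \<in> U1" and mu: "\<mu> \<in> incr_tuples N (n-k)" and nu: "\<nu> \<in> {1..N}" for z \<mu> \<nu>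
  proof -
    define hs where "hs = map f \<mu> @ map G [1..<k+1] @ [f \<nu>]"
    have lmu: "length \<mu> = n - k" using mu by (simp add: incr_tuples_def)
    have lhs: "length hs = Suc n" using hk lmu by (simp add: hs_def del: upt_Suc)
    have Beq: "B \<mu> \<nu> z = jac (Suc n) hs z" by (simp add: B_def hs_def)
    have setH: "set hs \<subseteq> H" using mu nu by (auto simp: hs_def H_def incr_tuples_def)
    have "cmod (B \<mu> \<nu> z) \<le> (\<Sum>i<Suc n. cmod (cpartial (hs!i) (coord n) z) *
            cmod (jac n (take i hs @ drop (Suc i) hs) z))"
      using jac_expand[OF lhs] Beq by simp
    also have "\<dots> \<le> (\<Sum>i<Suc n. K * (SA z + T z))"
    proof (rule sum_mono)
      fix i assume i: "i \<in> {..<Suc n}"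
      have c: "cmod (cpartial (hs!i) (coord n) z) \<le> K"
      proof -
        have "hs ! i \<in> H" using setH nth_mem[of i hs] lhs i by auto
        then show ?thesis by (rule Kb[OF z])
      qed
      have "cmod (jac n (take i hs @ drop (Suc i) hs) z) \<le> SA z + T z"
        using minor_bound[OF hk mu nu, of i f G z] i unfolding hs_def SA_def A_def T_def by simp
      then show "cmod (cpartial (hs!i) (coord n) z) * cmod (jac n (take i hs @ drop (Suc i) hs) z)
           \<le> K * (SA z + T z)"
        using c U1(3) by (intro mult_mono) auto
    qed
    also have "\<dots> = (real (Suc n) * K) * (SA z + T z)" by simp
    also have "\<dots> \<le> C2 * (SA z + T z)"
      using SAnn[of z] Tnn[of z] by (intro mult_right_mono) (auto simp: C2_def)
    finally show ?thesis .
  qed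
  define M where "M = real (card (incr_tuples N (n-k)) * N)"
  have M0: "M \<ge> 0" by (simp add: M_def)
  define \<epsilon> where "\<epsilon> = 1 / (2 * (M + 1) * C2)"
  have epos: "\<epsilon> > 0" using M0 C2pos by (simp add: \<epsilon>_def)
  have q: "M * \<epsilon> * C2 \<le> 1/2"
  proof -
    have e1: "\<epsilon> * C2 = 1 / (2 * (M + 1))" unfolding \<epsilon>_def using C2pos by simp
    have "M * (1 / (2 * (M + 1))) \<le> 1/2" using M0 by (simp add: field_simps)
    then show ?thesis by (simp add: mult.assoc e1)
  qed
  have fin1: "finite (f ` {1..N})" by simp
  obtain U2 where U2: "open U2" "P0 \<in> U2" and fb: "\<And>z h. z \<in> U2 \<Longrightarrow> h \<in> f ` {1..N} \<Longrightarrow> cmod (h z) \<le> \<epsilon>"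
    using small_fin[OF fin1 _ epos, of P0] hf f0 by blast
  define C where "C = max 2 C2"
  show ?thesis
  proof (intro exI[of _ "U1 \<inter> U2"] exI[of _ C] conjI ballI)
    show "open (U1 \<inter> U2)" using U1 U2 by auto
    show "P0 \<in> U1 \<inter> U2" using U1 U2 by auto
    show "C > 0" using C2pos by (simp add: C_def)
    fix z assume z: "z \<in> U1 \<inter> U2"
    have SE: "0 \<le> (\<Sum>\<mu>\<in>incr_tuples N (n-k). cmod (E \<mu> z))" by (simp add: sum_nonneg)
    have Ab: "cmod (A \<mu> z) \<le> cmod (E \<mu> z) + real N * \<epsilon> * C2 * (SA z + T z)"
      if mu: "\<mu> \<in> incr_tuples N (n-k)" for \<mu>
    proof -
      have "A \<mu> z = E \<mu> z - (\<Sum>\<nu>=1..N. B \<mu> \<nu> z * cnj (f \<nu> z))" by (simp add: E_def)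
      then have "cmod (A \<mu> z) \<le> cmod (E \<mu> z) + cmod (\<Sum>\<nu>=1..N. B \<mu> \<nu> z * cnj (f \<nu> z))"
        by (metis norm_triangle_ineq4)
      also have "cmod (\<Sum>\<nu>=1..N. B \<mu> \<nu> z * cnj (f \<nu> z)) \<le> (\<Sum>\<nu>=1..N. cmod (B \<mu> \<nu> z * cnj (f \<nu> z)))"
        by (rule norm_sum)
      also have "\<dots> \<le> (\<Sum>\<nu>=1..N. C2 * (SA z + T z) * \<epsilon>)"
      proof (rule sum_mono)
        fix \<nu> assume nu: "\<nu> \<in> {1..N}"
        have "cmod (f \<nu> z) \<le> \<epsilon>" using fb[of z "f \<nu>"] z nu by auto
        then show "cmod (B \<mu> \<nu> z * cnj (f \<nu> z)) \<le> C2 * (SA z + T z) * \<epsilon>"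
          unfolding norm_mult complex_mod_cnj using Bb[of z \<mu> \<nu>] z mu nu C2pos SAnn[of z] Tnn[of z]
          by (intro mult_mono) auto
      qed
      also have "\<dots> = real N * \<epsilon> * C2 * (SA z + T z)" by simp
      finally show ?thesis by simp
    qed
    have "SA z \<le> (\<Sum>\<mu>\<in>incr_tuples N (n-k). cmod (E \<mu> z) + real N * \<epsilon> * C2 * (SA z + T z))"
    proof -
      have sm: "(\<Sum>\<mu>\<in>incr_tuples N (n-k). cmod (A \<mu> z)) \<le> (\<Sum>\<mu>\<in>incr_tuples N (n-k). cmod (E \<mu> z) + real N * \<epsilon> * C2 * (SA z + T z))"
        by (rule sum_mono) (rule Ab)
      show ?thesis using sm unfolding SA_def[symmetric] .
    qed
    also have "\<dots> = (\<Sum>\<mu>\<in>incr_tuples N (n-k). cmod (E \<mu> z)) + M * \<epsilon> * C2 * (SA z + T z)"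
      by (simp add: sum.distrib M_def)
    finally have s1: "SA z \<le> (\<Sum>\<mu>\<in>incr_tuples N (n-k). cmod (E \<mu> z)) + M * \<epsilon> * C2 * (SA z + T z)" .
    have s2: "M * \<epsilon> * C2 * (SA z + T z) \<le> 1/2 * (SA z + T z)"
      using q SAnn[of z] Tnn[of z] by (intro mult_right_mono) auto
    have "SA z \<le> 2 * ((\<Sum>\<mu>\<in>incr_tuples N (n-k). cmod (E \<mu> z)) + T z)"
    proof -
      have "SA z \<le> (\<Sum>\<mu>\<in>incr_tuples N (n-k). cmod (E \<mu> z)) + 1/2 * (SA z + T z)"
        using s1 add_left_mono[OF s2] by (rule order_trans)
      then show ?thesis using Tnn[of z] by (rule half_lemma)
    qed
    also have "\<dots> \<le> C * ((\<Sum>\<mu>\<in>incr_tuples N (n-k). cmod (E \<mu> z)) + T z)"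
      using SE Tnn[of z] by (intro mult_right_mono) (auto simp: C_def)
    finally show "(\<Sum>\<mu>\<in>incr_tuples N (n-k). cmod (A \<mu> z))
         \<le> C * ((\<Sum>\<mu>\<in>incr_tuples N (n-k). cmod (E \<mu> z)) + T z)" unfolding SA_def .
    fix \<mu> \<nu> assume mu: "\<mu> \<in> incr_tuples N (n-k)" and nu: "\<nu> \<in> {1..N}"
    have "cmod (B \<mu> \<nu> z) \<le> C2 * (SA z + T z)" using Bb[OF _ mu nu] z by auto
    also have "\<dots> \<le> C * (SA z + T z)"
      using SAnn[of z] Tnn[of z] by (intro mult_right_mono) (auto simp: C_def)
    finally show "cmod (B \<mu> \<nu> z) \<le> C * ((\<Sum>\<mu>'\<in>incr_tuples N (n-k). cmod (A \<mu>' z)) + T z)"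
      unfolding SA_def .
  qed
qed


end
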